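(* Let $R$ be a commutative Noetherian ring of prime characteristic $p$ and $G$ an $x$-torsion-free left $R[x,f]$-module. Then $\mathcal{I}(G)=\{\mathfrak{p}_1\cap\dots\cap\mathfrak{p}_t: t\in\mathbb{N}_0,\ \mathfrak{p}_1,\dots,\mathfrak{p}_t\in\mathcal{I}(G)\cap\operatorname{Spec}(R)\}$, where the empty intersection ($t=0$) is $R$.
   Context: $R[x,f]$ is the Frobenius skew polynomial ring: free left $R$-module on $(x^i)_{i\ge0}$, $xr=r^px$. $x$-torsion-free: $xg=0\Rightarrow g=0$. $\operatorname{grann}N$ is the set of $\sum r_ix^i$ with each $r_ix^i$ annihilating the $R[x,f]$-submodule $N$. $\mathcal{I}(G)$ (the $G$-special $R$-ideals) is the set of ideals $\mathfrak{b}$ of $R$ with $\operatorname{grann}N=\bigoplus_{n\ge0}\mathfrak{b}x^n$ for some $R[x,f]$-submodule $N$ of $G$. *)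

theory Defs
  imports Main HOL.Modules "HOL-Computational_Algebra.Primes"
begin

definition ring_ideal :: "'r::comm_ring_1 set \<Rightarrow> bool" where
  "ring_ideal I \<longleftrightarrow> 0 \<in> I \<and> (\<forall>a\<in>I. \<forall>b\<in>I. a + b \<in> I) \<and> (\<forall>r a. a \<in> I \<longrightarrow> r * a \<in> I)"

definition prime_ideal :: "'r::comm_ring_1 set \<Rightarrow> bool" where
  "prime_ideal P \<longleftrightarrow> ring_ideal P \<and> P \<noteq> UNIV \<and> (\<forall>a b. a * b \<in> P \<longrightarrow> a \<in> P \<or> b \<in> P)"

definition noetherian_ring :: "'r::comm_ring_1 itself \<Rightarrow> bool" where
  "noetherian_ring _ \<longleftrightarrow>
     (\<forall>I :: nat \<Rightarrow> 'r set. (\<forall>n. ring_ideal (I n)) \<and> (\<forall>n. I n \<subseteq> I (Suc n))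
        \<longrightarrow> (\<exists>n. \<forall>m\<ge>n. I m = I n))"

text \<open>A left module over the Frobenius skew polynomial ring R[x,f] is an R-module G
  (scalar multiplication sc) together with the action phi of x, which is additive and
  satisfies x (r g) = r^p (x g), since x r = r^p x.\<close>
definition frob_module :: "nat \<Rightarrow> ('r::comm_ring_1 \<Rightarrow> 'g::ab_group_add \<Rightarrow> 'g) \<Rightarrow> ('g \<Rightarrow> 'g) \<Rightarrow> bool" where
  "frob_module p sc phi \<longleftrightarrow> module sc \<and> (\<forall>g h. phi (g + h) = phi g + phi h)
     \<and> (\<forall>r g. phi (sc r g) = sc (r ^ p) (phi g))"

definition x_torsion_free :: "('g::ab_group_add \<Rightarrow> 'g) \<Rightarrow> bool" where
  "x_torsion_free phi \<longleftrightarrow> (\<forall>g. phi g = 0 \<longrightarrow> g = 0)"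

definition frob_submodule :: "('r::comm_ring_1 \<Rightarrow> 'g::ab_group_add \<Rightarrow> 'g) \<Rightarrow> ('g \<Rightarrow> 'g) \<Rightarrow> 'g set \<Rightarrow> bool" where
  "frob_submodule sc phi N \<longleftrightarrow> module.subspace sc N \<and> (\<forall>g\<in>N. phi g \<in> N)"

text \<open>Elements of R[x,f] are represented by their coefficient sequences
  (finitely supported functions nat => R); f represents sum_i f(i) x^i.
  The homogeneous element r x^i acts on G by g |-> r (phi^i g).\<close>
definition skew_poly :: "(nat \<Rightarrow> 'r::zero) set" where
  "skew_poly = {f. finite {i. f i \<noteq> 0}}"

definition grann :: "('r::comm_ring_1 \<Rightarrow> 'g::ab_group_add \<Rightarrow> 'g) \<Rightarrow> ('g \<Rightarrow> 'g) \<Rightarrow> 'g set \<Rightarrow> (nat \<Rightarrow> 'r) set" where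
  "grann sc phi N = {f \<in> skew_poly. \<forall>i. \<forall>g\<in>N. sc (f i) ((phi ^^ i) g) = 0}"

text \<open>The graded ideal (direct sum over n of b x^n), as a set of coefficient sequences.\<close>
definition graded_ext :: "'r::comm_ring_1 set \<Rightarrow> (nat \<Rightarrow> 'r) set" where
  "graded_ext b = {f \<in> skew_poly. \<forall>i. f i \<in> b}"

definition special_ideals :: "('r::comm_ring_1 \<Rightarrow> 'g::ab_group_add \<Rightarrow> 'g) \<Rightarrow> ('g \<Rightarrow> 'g) \<Rightarrow> 'r set set" where
  "special_ideals sc phi = {b. ring_ideal b \<and>
      (\<exists>N. frob_submodule sc phi N \<and> grann sc phi N = graded_ext b)}"

end

theory Submission
  imports Defs
begin

locale fm =
  fixes p :: nat and sc :: "'r::comm_ring_1 \<Rightarrow> 'g::ab_group_add \<Rightarrow> 'g" and phi :: "'g \<Rightarrow> 'g"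
  assumes md: "module sc"
    and padd: "\<And>g h. phi (g + h) = phi g + phi h"
    and pcomm: "\<And>r g. phi (sc r g) = sc (r ^ p) (phi g)"
    and tf: "\<And>g. phi g = 0 \<Longrightarrow> g = 0"
    and p2: "p \<ge> 2"
begin

sublocale module sc by (rule md)

lemma phi0: "phi 0 = 0"
  using padd[of 0 0] by simp

lemma phin0: "(phi ^^ i) 0 = 0"
  by (induction i) (auto simp: phi0)

lemma phinadd: "(phi ^^ i) (g + h) = (phi ^^ i) g + (phi ^^ i) h"
  by (induction i) (auto simp: padd)

lemma phinsc: "(phi ^^ i) (sc r g) = sc (r ^ (p ^ i)) ((phi ^^ i) g)"
proof (induction i)
  case (Suc i)
  have "(r ^ p ^ i) ^ p = r ^ (p ^ Suc i)"
    by (metis power_mult mult.commute power_Suc)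
  then show ?case using Suc by (simp add: pcomm)
qed simp

definition kills where "kills t i N \<longleftrightarrow> (\<forall>g\<in>N. sc t ((phi ^^ i) g) = 0)"

definition spec where
  "spec b N \<longleftrightarrow> frob_submodule sc phi N \<and> (\<forall>i t. kills t i N \<longleftrightarrow> t \<in> b)"

lemma special_iff: "special_ideals sc phi = {b. ring_ideal b \<and> (\<exists>N. spec b N)}"
proof -
  have "grann sc phi N = graded_ext b \<longleftrightarrow> (\<forall>i t. kills t i N \<longleftrightarrow> t \<in> b)"
    if "ring_ideal b" for b N
  proof
    assume H: "grann sc phi N = graded_ext b"
    show "\<forall>i t. kills t i N \<longleftrightarrow> t \<in> b"
    proof (intro allI)
      fix i t
      define f where "f = (\<lambda>j::nat. if j = i then t else (0::'r))"
      have "{j. f j \<noteq> 0} \<subseteq> {i}" unfolding f_def by auto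
      then have fs: "f \<in> skew_poly" unfolding skew_poly_def
        using finite_subset by blast
      have "f \<in> grann sc phi N \<longleftrightarrow> kills t i N"
        using fs unfolding grann_def kills_def f_def by auto
      moreover have "f \<in> graded_ext b \<longleftrightarrow> t \<in> b"
        using fs that unfolding graded_ext_def f_def ring_ideal_def by auto
      ultimately show "kills t i N \<longleftrightarrow> t \<in> b" using H by simp
    qed
  next
    assume H: "\<forall>i t. kills t i N \<longleftrightarrow> t \<in> b"
    show "grann sc phi N = graded_ext b"
      unfolding grann_def graded_ext_def using H unfolding kills_def by auto
  qed
  then show ?thesis unfolding special_ideals_def spec_def by auto
qed

lemma rad_p:
  assumes "spec b N" "r ^ p \<in> b" shows "r \<in> b"
proof -
  have "kills (r ^ p) 1 N" using assms unfolding spec_def by blast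
  then have "\<forall>g\<in>N. sc r g = 0"
    unfolding kills_def using tf pcomm by simp
  then have "kills r 0 N" unfolding kills_def by simp
  then show ?thesis using assms unfolding spec_def by blast
qed

lemma rad_pow:
  assumes "spec b N" shows "r ^ (p ^ i) \<in> b \<Longrightarrow> r \<in> b"
proof (induction i arbitrary: r)
  case 0 then show ?case by simp
next
  case (Suc i)
  have "(r ^ p) ^ (p ^ i) \<in> b" using Suc.prems by (simp add: power_mult[symmetric] mult.commute)
  then have "r ^ p \<in> b" using Suc.IH by blast
  then show ?case using rad_p assms by blast
qed

lemma rad_sq:
  assumes "spec b N" "ring_ideal b" "r * r \<in> b" shows "r \<in> b"
proof -
  have "r ^ p = r ^ (p - 2) * (r * r)" using p2
    by (metis le_add_diff_inverse2 power_add power2_eq_square)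
  then have "r ^ p \<in> b" using assms unfolding ring_ideal_def by simp
  then show ?thesis using rad_p assms by blast
qed

lemma suc_pow: "\<exists>m. p ^ j = Suc m"
proof -
  have "p ^ j \<noteq> 0" using p2 by simp
  then show ?thesis using not0_implies_Suc by blast
qed

lemma colon_ideal:
  assumes "ring_ideal b" shows "ring_ideal {t. \<forall>q\<in>S. t * q \<in> b}"
  using assms unfolding ring_ideal_def by (auto simp: distrib_right mult.assoc)

lemma colon_spec:
  assumes sb: "spec b N" and ib: "ring_ideal b"
  shows "\<exists>N'. spec {t. \<forall>q\<in>S. t * q \<in> b} N'"
proof -
  let ?C = "{t. \<forall>q\<in>S. t * q \<in> b}"
  define N' where "N' = {g \<in> N. \<forall>i. \<forall>s\<in>?C. sc s ((phi ^^ i) g) = 0}"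
  have fN: "frob_submodule sc phi N" and kN: "\<And>i t. kills t i N \<longleftrightarrow> t \<in> b"
    using sb unfolding spec_def by auto
  have subN: "subspace N" and phN: "\<And>g. g \<in> N \<Longrightarrow> phi g \<in> N"
    using fN unfolding frob_submodule_def by auto
  have "subspace N'"
    unfolding subspace_def
  proof (intro conjI ballI allI)
    show "0 \<in> N'" unfolding N'_def using subspace_0[OF subN] phin0 by simp
  next
    fix c x assume "x \<in> N'"
    then show "sc c x \<in> N'" unfolding N'_def
      using subspace_scale[OF subN] by (auto simp: phinsc scale_left_commute[of _ "c ^ _"] simp del: scale_scale)
  next
    fix x y assume "x \<in> N'" "y \<in> N'"
    then show "x + y \<in> N'" unfolding N'_def
      using subspace_add[OF subN] by (auto simp: phinadd scale_right_distrib)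
  qed
  moreover have "\<forall>g\<in>N'. phi g \<in> N'"
  proof
    fix g assume g: "g \<in> N'"
    have eq: "(phi ^^ i) (phi g) = (phi ^^ (Suc i)) g" for i
      by (metis comp_apply funpow_Suc_right)
    have "\<forall>i. \<forall>s\<in>?C. sc s ((phi ^^ i) (phi g)) = 0"
    proof (intro allI ballI)
      fix i s assume "s \<in> ?C"
      then have "sc s ((phi ^^ Suc i) g) = 0" using g unfolding N'_def by blast
      then show "sc s ((phi ^^ i) (phi g)) = 0" by (simp only: eq)
    qed
    moreover have "phi g \<in> N" using g phN unfolding N'_def by blast
    ultimately show "phi g \<in> N'" unfolding N'_def by blast
  qed
  ultimately have "frob_submodule sc phi N'" unfolding frob_submodule_def by simp
  moreover have "kills t i N' \<longleftrightarrow> t \<in> ?C" for i t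
  proof
    assume "t \<in> ?C" then show "kills t i N'" unfolding kills_def N'_def by auto
  next
    assume kt: "kills t i N'"
    show "t \<in> ?C"
    proof (rule CollectI, rule ballI)
      fix q assume q: "q \<in> S"
      have mem: "sc q g \<in> N'" if g: "g \<in> N" for g
      proof -
        have "sc s ((phi ^^ j) (sc q g)) = 0" if s: "s \<in> ?C" for j s
        proof -
          obtain m where m: "p ^ j = Suc m" using suc_pow by blast
          have "s * q \<in> b" using s q by auto
          then have "(s * q) * q ^ m \<in> b" using ib unfolding ring_ideal_def
            by (metis mult.commute)
          moreover have "(s * q) * q ^ m = s * q ^ (p ^ j)"
            unfolding m by (simp add: mult.assoc)
          ultimately have "s * q ^ (p ^ j) \<in> b" by simp
          then have "kills (s * q ^ (p ^ j)) j N" using kN by blast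
          then show ?thesis using g unfolding kills_def by (simp add: phinsc scale_scale)
        qed
        then show ?thesis unfolding N'_def using g subspace_scale[OF subN] by auto
      qed
      have "kills (t * q ^ (p ^ i)) i N"
        unfolding kills_def
      proof
        fix g assume "g \<in> N"
        then have "sc t ((phi ^^ i) (sc q g)) = 0" using kt mem unfolding kills_def by blast
        then show "sc (t * q ^ p ^ i) ((phi ^^ i) g) = 0" by (simp add: phinsc scale_scale)
      qed
      then have h: "t * q ^ (p ^ i) \<in> b" using kN by blast
      obtain m where m: "p ^ i = Suc m" using suc_pow by blast
      have "(t * q) ^ (p ^ i) = t ^ m * (t * q ^ (p ^ i))"
        unfolding m by (simp add: power_mult_distrib mult_ac)
      then have "(t * q) ^ (p ^ i) \<in> b" using h ib unfolding ring_ideal_def by simp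
      then show "t * q \<in> b" using rad_pow[OF sb] by blast
    qed
  qed
  ultimately show ?thesis unfolding spec_def by blast
qed

lemma sum_spec:
  assumes "spec b1 N1" "spec b2 N2"
  shows "spec (b1 \<inter> b2) {g1 + g2 | g1 g2. g1 \<in> N1 \<and> g2 \<in> N2}"
proof -
  let ?N = "{g1 + g2 | g1 g2. g1 \<in> N1 \<and> g2 \<in> N2}"
  have s1: "subspace N1" "\<And>g. g \<in> N1 \<Longrightarrow> phi g \<in> N1" and k1: "\<And>i t. kills t i N1 \<longleftrightarrow> t \<in> b1"
    using assms(1) unfolding spec_def frob_submodule_def by auto
  have s2: "subspace N2" "\<And>g. g \<in> N2 \<Longrightarrow> phi g \<in> N2" and k2: "\<And>i t. kills t i N2 \<longleftrightarrow> t \<in> b2"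
    using assms(2) unfolding spec_def frob_submodule_def by auto
  have z1: "0 \<in> N1" and z2: "0 \<in> N2" using subspace_0 s1(1) s2(1) by auto
  have "subspace ?N"
    unfolding subspace_def
  proof (intro conjI ballI allI)
    have "(0::'g) = 0 + 0" by simp
    then show "0 \<in> ?N" using z1 z2 by blast
  next
    fix c x assume "x \<in> ?N"
    then obtain g1 g2 where e: "x = g1 + g2" "g1 \<in> N1" "g2 \<in> N2" by blast
    have "sc c x = sc c g1 + sc c g2" using e(1) by (simp add: scale_right_distrib)
    moreover have "sc c g1 \<in> N1" "sc c g2 \<in> N2"
      using subspace_scale[OF s1(1) e(2)] subspace_scale[OF s2(1) e(3)] by auto
    ultimately show "sc c x \<in> ?N" by blast
  next
    fix x y assume "x \<in> ?N" "y \<in> ?N"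
    then obtain g1 g2 h1 h2 where e: "x = g1 + g2" "g1 \<in> N1" "g2 \<in> N2"
      "y = h1 + h2" "h1 \<in> N1" "h2 \<in> N2" by blast
    have "x + y = (g1 + h1) + (g2 + h2)" using e(1,4) by (simp add: algebra_simps)
    moreover have "g1 + h1 \<in> N1" "g2 + h2 \<in> N2"
      using subspace_add[OF s1(1) e(2,5)] subspace_add[OF s2(1) e(3,6)] by auto
    ultimately show "x + y \<in> ?N" by blast
  qed
  moreover have "\<forall>g\<in>?N. phi g \<in> ?N"
  proof
    fix g assume "g \<in> ?N"
    then obtain g1 g2 where e: "g = g1 + g2" "g1 \<in> N1" "g2 \<in> N2" by blast
    have "phi g = phi g1 + phi g2" using e(1) padd by simp
    moreover have "phi g1 \<in> N1" "phi g2 \<in> N2" using s1(2) s2(2) e by auto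
    ultimately show "phi g \<in> ?N" by blast
  qed
  moreover have "kills t i ?N \<longleftrightarrow> t \<in> b1 \<inter> b2" for i t
  proof
    assume kt: "kills t i ?N"
    then have kt': "\<forall>x\<in>?N. sc t ((phi ^^ i) x) = 0" unfolding kills_def .
    have "kills t i N1" unfolding kills_def
    proof
      fix g assume "g \<in> N1"
      then have "g + 0 \<in> ?N" using z2 by blast
      then have "sc t ((phi ^^ i) (g + 0)) = 0" using kt' by blast
      then show "sc t ((phi ^^ i) g) = 0" by simp
    qed
    moreover have "kills t i N2" unfolding kills_def
    proof
      fix g assume "g \<in> N2"
      then have "0 + g \<in> ?N" using z1 by blast
      then have "sc t ((phi ^^ i) (0 + g)) = 0" using kt' by blast
      then show "sc t ((phi ^^ i) g) = 0" by simp
    qed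
    ultimately show "t \<in> b1 \<inter> b2" using k1 k2 by blast
  next
    assume "t \<in> b1 \<inter> b2"
    then have "kills t i N1" "kills t i N2" using k1 k2 by auto
    then show "kills t i ?N" unfolding kills_def by (auto simp: phinadd scale_right_distrib)
  qed
  ultimately show ?thesis unfolding spec_def frob_submodule_def by blast
qed

lemma univ_spec: "spec UNIV {0}"
  unfolding spec_def frob_submodule_def kills_def by (simp add: phi0 phin0)

end

lemma maximal_ideal_in:
  assumes noe: "noetherian_ring TYPE('r::comm_ring_1)" and ne: "I0 \<in> F"
    and id: "\<And>I. I \<in> F \<Longrightarrow> ring_ideal (I :: 'r set)"
  shows "\<exists>M\<in>F. \<forall>J\<in>F. M \<subseteq> J \<longrightarrow> J = M"
proof (rule ccontr)
  assume nt: "\<not> ?thesis"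
  have ex: "\<exists>J. J \<in> F \<and> M \<subset> J" if "M \<in> F" for M
  proof -
    have "\<forall>M\<in>F. \<exists>J\<in>F. M \<subseteq> J \<and> J \<noteq> M" using nt by auto
    then have "\<exists>J\<in>F. M \<subseteq> J \<and> J \<noteq> M" using that by (rule bspec)
    then obtain J where "J \<in> F" "M \<subseteq> J" "J \<noteq> M" by blast
    then show ?thesis by auto
  qed
  define nx where "nx M = (SOME J. J \<in> F \<and> M \<subset> J)" for M
  have nx: "nx M \<in> F \<and> M \<subset> nx M" if "M \<in> F" for M
    unfolding nx_def by (rule someI_ex[OF ex[OF that]])
  define c where "c n = (nx ^^ n) I0" for n
  have cS: "c (Suc n) = nx (c n)" for n by (simp add: c_def)
  have cF: "c n \<in> F" for n
  proof (induction n)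
    case 0 then show ?case using ne by (simp add: c_def)
  next
    case (Suc n) then show ?case using nx cS by metis
  qed
  have cs: "c n \<subset> c (Suc n)" for n using nx[OF cF[of n]] cS[of n] by simp
  have "(\<forall>n. ring_ideal (c n)) \<and> (\<forall>n. c n \<subseteq> c (Suc n))"
    using cF id cs by blast
  moreover have "\<forall>I :: nat \<Rightarrow> 'r set. (\<forall>n. ring_ideal (I n)) \<and> (\<forall>n. I n \<subseteq> I (Suc n))
        \<longrightarrow> (\<exists>n. \<forall>m\<ge>n. I m = I n)"
    using noe unfolding noetherian_ring_def by simp
  ultimately have "\<exists>n. \<forall>m\<ge>n. c m = c n" by (rule mp[OF spec[of _ c], rotated])
  then obtain n where "\<forall>m\<ge>n. c m = c n" by blast
  moreover have "Suc n \<ge> n" by simp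
  ultimately have "c (Suc n) = c n" by blast
  with cs[of n] show False by simp
qed

theorem corollary3p7:
  fixes sc :: "'r::comm_ring_1 \<Rightarrow> 'g::ab_group_add \<Rightarrow> 'g"
    and phi :: "'g \<Rightarrow> 'g"
    and p :: nat
  assumes "noetherian_ring TYPE('r)"
    and "prime p" and "CHAR('r) = p"
    and "frob_module p sc phi"
    and "x_torsion_free phi"
  shows "special_ideals sc phi =
    {\<Inter> (set Ps) | Ps. set Ps \<subseteq> special_ideals sc phi \<inter> {P. prime_ideal P}}"
proof -
  have fmi: "fm p sc phi" unfolding fm_def
    using assms(2,4,5) unfolding frob_module_def x_torsion_free_def
    by (auto simp: prime_ge_2_nat)
  interpret fm p sc phi by (rule fmi)
  let ?SP = "special_ideals sc phi \<inter> {P. prime_ideal P}"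
  have int_sp: "\<Inter> (set Ps) \<in> special_ideals sc phi" if "set Ps \<subseteq> special_ideals sc phi" for Ps
    using that
  proof (induction Ps)
    case Nil
    have "ring_ideal (UNIV :: 'r set)" unfolding ring_ideal_def by simp
    then show ?case using univ_spec unfolding special_iff by auto
  next
    case (Cons a Ps)
    then have "\<Inter> (set Ps) \<in> special_ideals sc phi" "a \<in> special_ideals sc phi" by auto
    then obtain N1 N2 where "spec a N1" "spec (\<Inter> (set Ps)) N2" "ring_ideal a"
      "ring_ideal (\<Inter> (set Ps))" unfolding special_iff by auto
    moreover have "ring_ideal (a \<inter> \<Inter> (set Ps))" using calculation(3,4)
      unfolding ring_ideal_def by auto
    moreover have "spec (a \<inter> \<Inter> (set Ps)) {g1 + g2 | g1 g2. g1 \<in> N1 \<and> g2 \<in> N2}"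
      using sum_spec calculation(1,2) by blast
    ultimately show ?case unfolding special_iff by auto
  qed
  let ?D = "{\<Inter> (set Ps) | Ps. set Ps \<subseteq> ?SP}"
  have idF: "ring_ideal I" if "I \<in> special_ideals sc phi" for I
    using that unfolding special_iff by blast
  have inD: "\<Inter> (set Ps) \<in> ?D" if "set Ps \<subseteq> ?SP" for Ps
    using that by blast
  have "b \<in> ?D" if bs: "b \<in> special_ideals sc phi" for b
  proof (rule ccontr)
    assume nb: "b \<notin> ?D"
    let ?F = "special_ideals sc phi - ?D"
    have "b \<in> ?F" using bs nb by blast
    moreover have "\<And>I. I \<in> ?F \<Longrightarrow> ring_ideal I" using idF by blast
    ultimately have "\<exists>M\<in>?F. \<forall>J\<in>?F. M \<subseteq> J \<longrightarrow> J = M"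
      by (rule maximal_ideal_in[OF assms(1)])
    then obtain M where M: "M \<in> ?F" and mx: "\<forall>J\<in>?F. M \<subseteq> J \<longrightarrow> J = M"
      by blast
    have Ms: "M \<in> special_ideals sc phi" and MD: "M \<notin> ?D" using M by auto
    from Ms obtain N where iM: "ring_ideal M" and sM: "spec M N" unfolding special_iff by blast
    have big: "J \<in> ?D" if "J \<in> special_ideals sc phi" "M \<subseteq> J" "J \<noteq> M" for J
      using mx that by blast
    have "M \<noteq> UNIV"
    proof
      assume MU: "M = UNIV"
      have "\<Inter> (set ([] :: 'r set list)) \<in> ?D" by (rule inD) simp
      then have "M \<in> ?D" unfolding MU by simp
      then show False using MD by blast
    qed
    moreover have "\<not> prime_ideal M"
    proof
      assume "prime_ideal M"
      then have "set [M] \<subseteq> ?SP" using Ms by simp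
      then have "\<Inter> (set [M]) \<in> ?D" by (rule inD)
      then have "M \<in> ?D" by simp
      then show False using MD by blast
    qed
    ultimately obtain x y where xy: "x * y \<in> M" "x \<notin> M" "y \<notin> M"
      using iM unfolding prime_ideal_def by blast
    have mulM: "r * a \<in> M" if "a \<in> M" for r a using iM that unfolding ring_ideal_def by blast
    define Q where "Q = {t. \<forall>q\<in>{x}. t * q \<in> M}"
    define Q2 where "Q2 = {t. \<forall>q\<in>Q. t * q \<in> M}"
    have Qs: "Q \<in> special_ideals sc phi" unfolding special_iff Q_def
      using colon_ideal[OF iM] colon_spec[OF sM iM] by blast
    have Q2s: "Q2 \<in> special_ideals sc phi" unfolding special_iff Q2_def
      using colon_ideal[OF iM] colon_spec[OF sM iM] by blast
    have MQ: "M \<subseteq> Q"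
    proof
      fix t assume "t \<in> M"
      then have "x * t \<in> M" by (rule mulM)
      then show "t \<in> Q" unfolding Q_def by (simp add: mult.commute)
    qed
    have "y \<in> Q" using xy(1) unfolding Q_def by (simp add: mult.commute)
    then have "Q \<noteq> M" using xy(3) by blast
    then have "Q \<in> ?D" using big[OF Qs MQ] by blast
    then obtain P1 where P1: "set P1 \<subseteq> ?SP" "Q = \<Inter> (set P1)" by blast
    have MQ2: "M \<subseteq> Q2"
    proof
      fix t assume "t \<in> M"
      then have "q * t \<in> M" for q by (rule mulM)
      then show "t \<in> Q2" unfolding Q2_def by (simp add: mult.commute)
    qed
    have "x \<in> Q2" unfolding Q2_def Q_def by (simp add: mult.commute)
    then have "Q2 \<noteq> M" using xy(2) by blast
    then have "Q2 \<in> ?D" using big[OF Q2s MQ2] by blast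
    then obtain P2 where P2: "set P2 \<subseteq> ?SP" "Q2 = \<Inter> (set P2)" by blast
    have "M = Q \<inter> Q2"
    proof
      show "M \<subseteq> Q \<inter> Q2" using MQ MQ2 by blast
    next
      show "Q \<inter> Q2 \<subseteq> M"
      proof
        fix s assume "s \<in> Q \<inter> Q2"
        then have "s * s \<in> M" unfolding Q2_def by blast
        then show "s \<in> M" using rad_sq[OF sM iM] by blast
      qed
    qed
    then have "M = \<Inter> (set (P1 @ P2))" using P1(2) P2(2) by (simp add: Inter_Un_distrib)
    moreover have "set (P1 @ P2) \<subseteq> ?SP" using P1(1) P2(1) by simp
    then have "\<Inter> (set (P1 @ P2)) \<in> ?D" by (rule inD)
    ultimately have "M \<in> ?D" by simp
    then show False using MD by blast
  qed
  moreover have "x \<in> special_ideals sc phi" if "x \<in> ?D" for x using that int_sp by blast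
  ultimately show ?thesis by blast
qed

end
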